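(* Let $r_1=\frac5{11}+\frac1{22\pi}$, $r_2=\frac5{11}-\frac1{220\pi}$. Let $f$ be the interval exchange transformation of $I=[-1,1)$ with alphabet $\mathcal{A}=\{A,B,C,D,E,F,G,H\}$, where the intervals $I_A,I_B,\dots,I_H$ appear in $I$ in this order from left to right, the images $f(I_D),f(I_B),f(I_E),f(I_C),f(I_H),f(I_F),f(I_A),f(I_G)$ appear in $I$ in this order from left to right, and the lengths are $$(\lambda_A,\dots,\lambda_H)=\Big(\tfrac1{20\pi},\ \tfrac12,\ \tfrac1{22}-\tfrac{21}{220\pi},\ \tfrac5{11}+\tfrac1{22\pi},\ \tfrac1{20\pi},\ \tfrac12,\ \tfrac1{22}-\tfrac{21}{220\pi},\ \tfrac5{11}+\tfrac1{22\pi}\Big)$$ (equivalently $(r_1-r_2,\ \frac12,\ r_2-2r_1+\frac12,\ r_1,\ r_1-r_2,\ \frac12,\ r_2-2r_1+\frac12,\ r_1)$). Then $f$ satisfies the modified Keane condition: $f^m(p_\alpha)\ne p_\beta$ for all $m\ge1$, all $\alpha\in\mathcal{A}$, and all $\beta\in\mathcal{A}$ with $p_\beta\notin\{-1,0\}$, where $p_\alpha$ denotes the left endpoint of $I_\alpha$.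
   Context: An interval exchange transformation of $I=[-1,1)$: a finite partition of $I$ into intervals $I_\alpha$ closed on the left and open on the right, and a bijection $f:I\to I$ whose restriction to each $I_\alpha$ is a translation; it is determined by the left-to-right order of the $I_\alpha$ in $I$, the left-to-right order of the $f(I_\alpha)$ in $I$, and the lengths $\lambda_\alpha$ of the $I_\alpha$. *)

theory Defs
  imports Complex_Main
begin

text \<open>General interval exchange transformation of I = [-1,1), given by the
left-to-right order of the intervals I_a in I (list top), the left-to-right order of
the images f(I_a) in I (list bot), and the lengths lam.\<close>

definition iet_left :: "'a list \<Rightarrow> ('a \<Rightarrow> real) \<Rightarrow> 'a \<Rightarrow> real" where
  "iet_left ord lam a = -1 + sum_list (map lam (takeWhile (\<lambda>b. b \<noteq> a) ord))"

definition iet_interval :: "'a list \<Rightarrow> ('a \<Rightarrow> real) \<Rightarrow> 'a \<Rightarrow> real set" where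
  "iet_interval tp lam a = {iet_left tp lam a ..< iet_left tp lam a + lam a}"

definition iet_map :: "'a list \<Rightarrow> 'a list \<Rightarrow> ('a \<Rightarrow> real) \<Rightarrow> real \<Rightarrow> real" where
  "iet_map tp bt lam x =
     (if \<exists>a\<in>set tp. x \<in> iet_interval tp lam a
      then (let a = (SOME a. a \<in> set tp \<and> x \<in> iet_interval tp lam a)
            in x - iet_left tp lam a + iet_left bt lam a)
      else x)"

datatype letter = A | B | C | D | E | F | G | H

definition r1 :: real where "r1 = 5/11 + 1/(22*pi)"
definition r2 :: real where "r2 = 5/11 - 1/(220*pi)"

definition top8 :: "letter list" where "top8 = [A, B, C, D, E, F, G, H]"
definition bot8 :: "letter list" where "bot8 = [D, B, E, C, H, F, A, G]"

fun lam8 :: "letter \<Rightarrow> real" where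
  "lam8 A = 1/(20*pi)"
| "lam8 B = 1/2"
| "lam8 C = 1/22 - 21/(220*pi)"
| "lam8 D = 5/11 + 1/(22*pi)"
| "lam8 E = 1/(20*pi)"
| "lam8 F = 1/2"
| "lam8 G = 1/22 - 21/(220*pi)"
| "lam8 H = 5/11 + 1/(22*pi)"

definition f8 :: "real \<Rightarrow> real" where "f8 = iet_map top8 bot8 lam8"

definition p8 :: "letter \<Rightarrow> real" where "p8 = iet_left top8 lam8"

end

theory Submission
  imports Defs "HOL-Computational_Algebra.Polynomial"
begin

lemma ints_coeff_mult:
  fixes p q :: "real poly"
  assumes "\<forall>i. coeff p i \<in> \<int>" "\<forall>i. coeff q i \<in> \<int>"
  shows "\<forall>i. coeff (p*q) i \<in> \<int>"
  using assms by (auto simp: coeff_mult intro!: Ints_sum Ints_mult)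

lemma ints_coeff_power:
  fixes p :: "real poly"
  assumes "\<forall>i. coeff p i \<in> \<int>"
  shows "\<forall>i. coeff (p^k) i \<in> \<int>"
proof (induction k)
  case 0 show ?case by (auto simp: coeff_1)
next
  case (Suc k) then show ?case using ints_coeff_mult[OF assms Suc] by simp
qed

lemma higher_pderiv_pcompose_reflect:
  fixes p :: "real poly"
  assumes "pcompose p [:c, -1:] = p"
  shows "(pderiv ^^ j) p = smult ((-1)^j) (pcompose ((pderiv ^^ j) p) [:c, -1:])"
proof (induction j)
  case 0 then show ?case using assms by simp
next
  case (Suc j)
  have "(pderiv ^^ Suc j) p = pderiv ((pderiv ^^ j) p)" by simp
  also have "\<dots> = pderiv (smult ((-1)^j) (pcompose ((pderiv ^^ j) p) [:c, -1:]))"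
    using Suc by metis
  also have "\<dots> = smult ((-1)^Suc j) (pcompose ((pderiv ^^ Suc j) p) [:c, -1:])"
    by (simp add: pderiv_smult pderiv_pcompose pderiv_pCons)
  finally show ?case .
qed

lemma pi_irrational: "pi \<notin> \<rat>"
proof
  assume "pi \<in> \<rat>"
  then obtain a b :: int where b: "b > 0" and pi_eq: "pi = of_int a / of_int b"
    by (auto elim: Rats_cases')
  have a: "a > 0" using pi_gt_zero b by (simp add: pi_eq zero_less_divide_iff)
  have "(\<lambda>n. (pi*a)^n / fact n) \<longlonglongrightarrow> 0"
    using summable_LIMSEQ_zero[OF summable_exp[of "pi*a"]] by (simp add: divide_inverse mult.commute)
  then have "\<forall>\<^sub>F n in sequentially. (pi*a)^n / fact n < 1/pi"
    by (rule order_tendstoD) simp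
  then obtain n where n: "(pi*a)^n / fact n < 1/pi" by (meson eventually_sequentially order_refl)
  define g where "g = monom (1::real) n * [:of_int a, - of_int b:]^n"
  define p where "p = smult (1/fact n) g"
  define Dp where "Dp j = (pderiv ^^ j) p" for j
  define Fp where "Fp = (\<Sum>k\<le>n. smult ((-1)^k) (Dp (2*k)))"
  have poly_g: "poly g x = x^n * (of_int a - of_int b*x)^n" for x :: real
    by (simp add: g_def poly_monom mult.commute)
  have deg_g: "degree g = 2*n"
    by (simp add: g_def degree_mult_eq degree_monom_eq degree_power_eq b[THEN less_imp_neq, symmetric])
  have deg_p: "degree p = 2*n" by (simp add: p_def deg_g)
  have D0: "Dp (2*n+2) = 0"
  proof -
    have "Dp (2*n+2) = pderiv (Dp (2*n+1))" by (simp add: Dp_def)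
    also have "\<dots> = 0" using degree_higher_pderiv[of "2*n+1" p] deg_p
      by (simp add: Dp_def pderiv_eq_0_iff)
    finally show ?thesis .
  qed
  have coeff_g_int: "coeff g j \<in> \<int>" for j
  proof -
    have "\<forall>i. coeff ([:of_int a, - of_int b:] :: real poly) i \<in> \<int>"
      by (auto simp: coeff_pCons split: nat.splits)
    from ints_coeff_power[OF this] show ?thesis
      by (auto simp: g_def coeff_monom_mult)
  qed
  have coeff_g_0: "coeff g j = 0" if "j < n" for j
    using that by (simp add: g_def coeff_monom_mult)
  have Dj0: "poly (Dp j) 0 \<in> \<int>" for j
  proof (cases "j < n")
    case True
    then show ?thesis by (simp add: Dp_def poly_0_coeff_0 coeff_higher_pderiv p_def coeff_g_0)
  next
    case False
    then obtain k where k: "fact j = fact n * (k::nat)"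
      using fact_dvd[of n j] by (auto elim!: dvdE)
    have kr: "(fact j::real) = fact n * of_nat k" by (metis k of_nat_fact of_nat_mult)
    have "poly (Dp j) 0 = pochhammer 1 j * (coeff g j / fact n)"
      by (simp add: Dp_def poly_0_coeff_0 coeff_higher_pderiv p_def)
    also have "\<dots> = of_nat k * coeff g j"
      by (simp add: pochhammer_fact[symmetric] kr)
    finally show ?thesis using coeff_g_int by (simp add: Ints_mult)
  qed
  have refl_g: "pcompose g [:pi, -1:] = g"
  proof (rule poly_eq_poly_eq_iff[THEN iffD1], rule ext)
    fix x
    have bpi: "of_int b * pi = of_int a" using pi_eq b by (simp add: field_simps)
    have "poly (pcompose g [:pi, -1:]) x = (pi - x)^n * (of_int a - of_int b*(pi - x))^n"
      by (simp add: poly_pcompose poly_g)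
    also have "\<dots> = ((pi - x)*of_int b)^n * x^n"
    proof -
      have "of_int a - of_int b*(pi - x) = of_int b * x" using bpi by (simp add: algebra_simps)
      then show ?thesis by (simp add: power_mult_distrib mult_ac)
    qed
    also have "\<dots> = poly g x"
    proof -
      have "(pi - x)*of_int b = of_int a - of_int b * x" using bpi by (simp add: algebra_simps)
      then show ?thesis by (simp add: poly_g mult_ac)
    qed
    finally show "poly (pcompose g [:pi, -1:]) x = poly g x" .
  qed
  have refl_p: "pcompose p [:pi, -1:] = p"
    using refl_g by (simp add: p_def pcompose_smult)
  have Djpi: "poly (Dp j) pi \<in> \<int>" for j
  proof -
    have "Dp j = smult ((-1)^j) (pcompose (Dp j) [:pi, -1:])"
      unfolding Dp_def by (rule higher_pderiv_pcompose_reflect[OF refl_p])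
    then have "poly (Dp j) 0 = (-1)^j * poly (Dp j) pi"
      by (metis (no_types, lifting) poly_smult poly_pcompose diff_zero poly_pCons mult_zero_right
          mult_zero_left add.right_neutral pCons_0_0 poly_0 add_0)
    then have "poly (Dp j) pi = (-1)^j * poly (Dp j) 0"
      by (simp add: power_mult_distrib[symmetric])
    then show ?thesis using Dj0[of j] by (simp add: Ints_mult)
  qed
  have FF: "pderiv (pderiv Fp) + Fp = p"
  proof -
    have pp: "(pderiv^^2) (Dp j) = Dp (j+2)" for j
      unfolding Dp_def by (metis add.commute comp_apply funpow_add)
    have "pderiv (pderiv Fp) = (pderiv^^2) Fp" by (simp add: numeral_2_eq_2)
    also have "\<dots> = (\<Sum>k\<le>n. smult ((-1)^k) (Dp (2*k+2)))"
      by (simp add: Fp_def higher_pderiv_sum higher_pderiv_smult pp)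
    also have "\<dots> = (\<Sum>k<n. smult ((-1)^k) (Dp (2*k+2)))"
      using D0 by (simp add: lessThan_Suc_atMost[symmetric])
    finally have 1: "pderiv (pderiv Fp) = (\<Sum>k<n. smult ((-1)^k) (Dp (2*k+2)))" .
    have "Fp = Dp 0 + (\<Sum>k<n. smult ((-1)^Suc k) (Dp (2*Suc k)))"
      unfolding Fp_def by (subst sum.atMost_shift) simp
    also have "\<dots> = p - (\<Sum>k<n. smult ((-1)^k) (Dp (2*k+2)))"
      by (simp add: Dp_def sum_negf)
    finally show ?thesis using 1 by simp
  qed
  define Gp where "Gp x = poly (pderiv Fp) x * sin x - poly Fp x * cos x" for x
  have dG: "DERIV Gp x :> poly p x * sin x" for x
  proof -
    have "DERIV Gp x :> (poly (pderiv (pderiv Fp)) x * sin x + poly (pderiv Fp) x * cos x)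
                      - (poly (pderiv Fp) x * cos x + poly Fp x * (- sin x))"
      unfolding Gp_def by (intro derivative_eq_intros) auto
    moreover have "(poly (pderiv (pderiv Fp)) x * sin x + poly (pderiv Fp) x * cos x)
                      - (poly (pderiv Fp) x * cos x + poly Fp x * (- sin x)) = poly (pderiv (pderiv Fp) + Fp) x * sin x"
      by (simp add: algebra_simps)
    ultimately show ?thesis using FF by simp
  qed
  obtain z where z: "0 < z" "z < pi" and mvt: "Gp pi - Gp 0 = (pi - 0) * (poly p z * sin z)"
    using MVT2[of 0 pi Gp "\<lambda>x. poly p x * sin x"] dG pi_gt_zero by blast
  have Gdiff: "Gp pi - Gp 0 = poly Fp pi + poly Fp 0" by (simp add: Gp_def)
  have Fint: "poly Fp x \<in> \<int>" if "x = 0 \<or> x = pi" for x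
    using that Dj0 Djpi by (auto simp: Fp_def poly_sum intro!: Ints_sum Ints_mult)
  have bz: "of_int b * z < of_int a"
  proof -
    have "of_int b * z < of_int b * pi" using z(2) b by simp
    also have "\<dots> = of_int a" using pi_eq b by (simp add: field_simps)
    finally show ?thesis .
  qed
  have Gint: "Gp pi - Gp 0 \<in> \<int>" using Gdiff Fint by auto
  have ppos: "0 < poly p z"
  proof -
    have "0 < of_int a - of_int b * z" using bz by simp
    then show "0 < poly p z" using z by (simp add: p_def poly_g)
  qed
  moreover have "0 < Gp pi - Gp 0"
    using ppos mvt z sin_gt_zero[of z] by simp
  moreover have "Gp pi - Gp 0 < 1"
  proof -
    have h1: "0 < of_int a - of_int b * z" using bz by simp
    have h2: "of_int a - of_int b * z \<le> of_int a" using b z by simp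
    have "z^n * (of_int a - of_int b * z)^n \<le> pi^n * (of_int a)^n"
      using z h1 h2 by (intro mult_mono power_mono) auto
    then have "poly p z \<le> (pi * a)^n / fact n"
      by (simp add: p_def poly_g power_mult_distrib divide_right_mono)
    also have "\<dots> < 1/pi" by (rule n)
    finally have pz1: "pi * poly p z < 1" using pi_gt_zero by (simp add: field_simps)
    have "poly p z * sin z \<le> poly p z"
      using sin_le_one[of z] ppos by (simp add: mult_left_le)
    then have "pi * (poly p z * sin z) \<le> pi * poly p z"
      using pi_gt_zero by (intro mult_left_mono) auto
    with pz1 have "pi * (poly p z * sin z) < 1" by linarith
    then show ?thesis using mvt by simp
  qed
  ultimately show False using Gint
    by (elim Ints_cases) simp
qed
definition uu :: real where "uu = 1/pi"

lemma pi_ge_3: "3 \<le> pi"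
proof -
  have "sin (pi/6) \<le> pi/6" by (rule sin_x_le_x) simp
  then show ?thesis by (simp add: sin_30)
qed

lemma uu_bounds: "1/4 < uu" "uu \<le> 1/3"
  using pi_ge_3 pi_less_4 by (auto simp: uu_def field_simps)

lemma rep_unique:
  assumes "a \<in> \<rat>" "b \<in> \<rat>" "a' \<in> \<rat>" "b' \<in> \<rat>" "a + b*uu = a' + b'*uu"
  shows "a = a' \<and> b = b'"
proof (cases "b = b'")
  case True then show ?thesis using assms by simp
next
  case False
  then have "uu = (a' - a)/(b - b')" using assms(5) by (simp add: field_simps)
  moreover have "(a' - a)/(b - b') \<in> \<rat>" using assms(1-4) by (intro Rats_divide Rats_diff)
  ultimately have "uu \<in> \<rat>" by simp
  then have "1/uu \<in> \<rat>" by simp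
  then have "pi \<in> \<rat>" by (simp add: uu_def)
  then show ?thesis using pi_irrational by blast
qed

fun pa :: "letter \<Rightarrow> real" where
  "pa A = -1" | "pa B = -1" | "pa C = -1/2" | "pa D = -5/11"
| "pa E = 0" | "pa F = 0" | "pa G = 1/2" | "pa H = 6/11"
fun pb :: "letter \<Rightarrow> real" where
  "pb A = 0" | "pb B = 1/20" | "pb C = 1/20" | "pb D = -1/22"
| "pb E = 0" | "pb F = 1/20" | "pb G = 1/20" | "pb H = -1/22"
fun la :: "letter \<Rightarrow> real" where
  "la A = 0" | "la B = 1/2" | "la C = 1/22" | "la D = 5/11"
| "la E = 0" | "la F = 1/2" | "la G = 1/22" | "la H = 5/11"
fun lb :: "letter \<Rightarrow> real" where
  "lb A = 1/20" | "lb B = 0" | "lb C = -21/220" | "lb D = 1/22"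
| "lb E = 1/20" | "lb F = 0" | "lb G = -21/220" | "lb H = 1/22"
fun ta :: "letter \<Rightarrow> real" where
  "ta A = 43/22" | "ta B = 5/11" | "ta C = 5/11" | "ta D = -6/11"
| "ta E = -1/22" | "ta F = 5/11" | "ta G = 5/11" | "ta H = -6/11"
fun tb :: "letter \<Rightarrow> real" where
  "tb A = 1/22" | "tb B = -1/220" | "tb C = 1/22" | "tb D = 1/22"
| "tb E = 1/22" | "tb F = -1/220" | "tb G = 1/22" | "tb H = 1/22"

lemma lam8_rep: "lam8 c = la c + lb c * uu"
  by (cases c) (simp_all add: uu_def field_simps)

lemma p8_rep: "p8 c = pa c + pb c * uu"
  by (cases c) (simp_all add: p8_def iet_left_def top8_def uu_def field_simps)

lemma q8_rep: "iet_left bot8 lam8 c = pa c + pb c * uu + ta c + tb c * uu"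
  by (cases c) (simp_all add: iet_left_def bot8_def uu_def field_simps)

lemma Iv: "iet_interval top8 lam8 c = {pa c + pb c * uu ..< pa c + pb c * uu + la c + lb c * uu}"
  using p8_rep[of c] lam8_rep[of c] by (simp add: iet_interval_def p8_def add.assoc)

lemma Iv_unique: "x \<in> iet_interval top8 lam8 a \<Longrightarrow> x \<in> iet_interval top8 lam8 c \<Longrightarrow> a = c"
  using uu_bounds by (cases a; cases c) (auto simp: Iv)

lemma f8_eval:
  assumes "x \<in> iet_interval top8 lam8 c"
  shows "f8 x = x + ta c + tb c * uu"
proof -
  have c: "c \<in> set top8" by (cases c) (simp_all add: top8_def)
  have "(SOME a. a \<in> set top8 \<and> x \<in> iet_interval top8 lam8 a) = c"
    using assms c Iv_unique by (intro some_equality) auto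
  then show ?thesis using assms c q8_rep[of c] p8_rep[of c]
    by (auto simp: f8_def iet_map_def p8_def Let_def)
qed

lemma eval_at:
  assumes "pa c + pb c * uu \<le> x" "x < pa c + pb c * uu + la c + lb c * uu"
  shows "f8 x = x + ta c + tb c * uu"
  using assms by (intro f8_eval) (simp add: Iv)

lemma f8_step:
  assumes "-1 \<le> x" "x < 1"
  shows "\<exists>c. f8 x = x + ta c + tb c * uu \<and> -1 \<le> f8 x \<and> f8 x < 1"
proof -
  have "\<exists>c. x \<in> iet_interval top8 lam8 c"
  proof (rule ccontr)
    assume "\<not> ?thesis"
    then have "\<And>c. x \<notin> iet_interval top8 lam8 c" by blast
    from this[of A] this[of B] this[of C] this[of D] this[of E] this[of F] this[of G] this[of H]
    show False using assms uu_bounds by (simp add: Iv)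
  qed
  then obtain c where c: "x \<in> iet_interval top8 lam8 c" by blast
  have "f8 x = x + ta c + tb c * uu" using f8_eval[OF c] .
  moreover have "-1 \<le> x + ta c + tb c * uu \<and> x + ta c + tb c * uu < 1"
    using c uu_bounds by (cases c) (simp_all add: Iv)
  ultimately show ?thesis by auto
qed

lemma ta_rat: "ta c \<in> \<rat>" by (cases c) simp_all
lemma tb_rat: "tb c \<in> \<rat>" by (cases c) simp_all
lemma w_nonneg: "0 \<le> 2 * ta c + 200 * tb c" by (cases c) simp_all

lemma tail:
  assumes "a \<in> \<rat>" "b \<in> \<rat>" "-1 \<le> a + b*uu" "a + b*uu < 1" "11 < 2*a + 200*b"
  shows "\<exists>a' b'. a' \<in> \<rat> \<and> b' \<in> \<rat> \<and> (f8^^m) (a + b*uu) = a' + b'*uu \<and>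
           -1 \<le> a' + b'*uu \<and> a' + b'*uu < 1 \<and> 11 < 2*a' + 200*b'"
proof (induction m)
  case 0 then show ?case using assms by auto
next
  case (Suc m)
  then obtain a' b' where h: "a' \<in> \<rat>" "b' \<in> \<rat>" "(f8^^m) (a + b*uu) = a' + b'*uu"
    "-1 \<le> a' + b'*uu" "a' + b'*uu < 1" "11 < 2*a' + 200*b'" by blast
  obtain c where c: "f8 (a' + b'*uu) = a' + b'*uu + ta c + tb c * uu"
    "-1 \<le> f8 (a' + b'*uu)" "f8 (a' + b'*uu) < 1" using f8_step[OF h(4,5)] by blast
  show ?case
  proof (intro exI conjI)
    show "a' + ta c \<in> \<rat>" using h(1) ta_rat by (rule Rats_add)
    show "b' + tb c \<in> \<rat>" using h(2) tb_rat by (rule Rats_add)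
    show "(f8^^Suc m) (a + b*uu) = (a' + ta c) + (b' + tb c)*uu"
      using h(3) c(1) by (simp add: algebra_simps)
    show "-1 \<le> (a' + ta c) + (b' + tb c)*uu" using c by (simp add: algebra_simps)
    show "(a' + ta c) + (b' + tb c)*uu < 1" using c by (simp add: algebra_simps)
    show "11 < 2*(a' + ta c) + 200*(b' + tb c)" using h(6) w_nonneg[of c] by simp
  qed
qed

lemma p_w_small: "\<beta> \<in> {B,C,D,F,G,H} \<Longrightarrow> 2 * pa \<beta> + 200 * pb \<beta> \<le> 11"
  by auto

lemma pa_rat: "pa c \<in> \<rat>" by (cases c) simp_all
lemma pb_rat: "pb c \<in> \<rat>" by (cases c) simp_all

lemma far:
  assumes "a \<in> \<rat>" "b \<in> \<rat>" "-1 \<le> a + b*uu" "a + b*uu < 1" "11 < 2*a + 200*b"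
    "\<beta> \<in> {B,C,D,F,G,H}"
  shows "(f8^^m) (a + b*uu) \<noteq> p8 \<beta>"
proof
  assume eq: "(f8^^m) (a + b*uu) = p8 \<beta>"
  obtain a' b' where h: "a' \<in> \<rat>" "b' \<in> \<rat>" "(f8^^m) (a + b*uu) = a' + b'*uu"
    "11 < 2*a' + 200*b'" using tail[OF assms(1-5), of m] by blast
  have "a' + b'*uu = pa \<beta> + pb \<beta> * uu" using eq h(3) p8_rep by simp
  then have "a' = pa \<beta> \<and> b' = pb \<beta>" using rep_unique h(1,2) pa_rat pb_rat by blast
  then show False using h(4) p_w_small[OF assms(6)] by simp
qed

lemma near_lemma:
  assumes "a \<in> \<rat>" "b \<in> \<rat>" "\<beta> \<in> {B,C,D,F,G,H}"
    "\<forall>\<gamma>\<in>{B,C,D,F,G,H}. a \<noteq> pa \<gamma> \<or> b \<noteq> pb \<gamma>"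
  shows "a + b*uu \<noteq> p8 \<beta>"
proof
  assume "a + b*uu = p8 \<beta>"
  then have "a + b*uu = pa \<beta> + pb \<beta> * uu" by (simp add: p8_rep)
  then have "a = pa \<beta> \<and> b = pb \<beta>" using rep_unique assms(1,2) pa_rat pb_rat by blast
  then show False using assms(3,4) by blast
qed

lemma chain_lemma:
  assumes "(f8^^k) x = a + b*uu" "a \<in> \<rat>" "b \<in> \<rat>" "-1 \<le> a + b*uu" "a + b*uu < 1"
    "11 < 2*a + 200*b" "\<beta> \<in> {B,C,D,F,G,H}"
    "\<forall>j::nat. 1 \<le> j \<and> j < k \<longrightarrow> (f8^^j) x \<noteq> p8 \<beta>"
  shows "\<forall>m::nat. 1 \<le> m \<longrightarrow> (f8^^m) x \<noteq> p8 \<beta>"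
proof (intro allI impI)
  fix m :: nat assume m: "1 \<le> m"
  show "(f8^^m) x \<noteq> p8 \<beta>"
  proof (cases "m < k")
    case True then show ?thesis using assms(8) m by blast
  next
    case False
    then have "(f8^^m) x = (f8^^(m-k)) ((f8^^k) x)"
      by (metis funpow_add comp_apply le_add_diff_inverse2 not_less)
    then show ?thesis using far[OF assms(2-7), of "m-k"] assms(1) by simp
  qed
qed

lemma orb_A: assumes "\<beta> \<in> {B,C,D,F,G,H}" shows "\<forall>m::nat. 1 \<le> m \<longrightarrow> (f8^^m) (p8 A) \<noteq> p8 \<beta>"
proof -
  have s1: "f8 (p8 A) = (21/22::real) + (1/22::real) * uu"
  proof -
    have "f8 (p8 A) = (pa A + pb A * uu) + ta A + tb A * uu" unfolding p8_rep by (rule eval_at) (use uu_bounds in simp_all)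
    then show ?thesis by (simp add: p8_rep field_simps)
  qed
  have s2: "f8 ((21/22::real) + (1/22::real) * uu) = (9/22::real) + (1/11::real) * uu"
  proof -
    have "f8 ((21/22::real) + (1/22::real) * uu) = ((21/22::real) + (1/22::real) * uu) + ta H + tb H * uu" by (rule eval_at) (use uu_bounds in simp_all)
    then show ?thesis by (simp add: p8_rep field_simps)
  qed
  have i1: "(f8^^1) (p8 A) = (21/22::real) + (1/22::real) * uu"
    by (simp only: One_nat_def funpow.simps comp_apply id_apply s1)
  have i2: "(f8^^2) (p8 A) = (9/22::real) + (1/11::real) * uu"
    by (simp only: numeral_2_eq_2 funpow.simps comp_apply id_apply s1 s2)
  have near: "\<forall>j::nat. 1 \<le> j \<and> j < 2 \<longrightarrow> (f8^^j) (p8 A) \<noteq> p8 \<beta>"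
  proof (intro allI impI)
    fix j :: nat assume j: "1 \<le> j \<and> j < 2"
    then have "j = 1" by arith
    then show "(f8^^j) (p8 A) \<noteq> p8 \<beta>"
    proof -
      assume "j = 1"
      show ?thesis unfolding \<open>j = 1\<close> i1 by (intro near_lemma assms) simp_all
    qed
  qed
  show ?thesis by (rule chain_lemma[OF i2 _ _ _ _ _ assms near]) (use uu_bounds in simp_all)
qed

lemma orb_B: assumes "\<beta> \<in> {B,C,D,F,G,H}" shows "\<forall>m::nat. 1 \<le> m \<longrightarrow> (f8^^m) (p8 B) \<noteq> p8 \<beta>"
proof -
  have s1: "f8 (p8 B) = (-6/11::real) + (1/22::real) * uu"
  proof -
    have "f8 (p8 B) = (pa B + pb B * uu) + ta B + tb B * uu" unfolding p8_rep by (rule eval_at) (use uu_bounds in simp_all)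
    then show ?thesis by (simp add: p8_rep field_simps)
  qed
  have s2: "f8 ((-6/11::real) + (1/22::real) * uu) = (-1/11::real) + (9/220::real) * uu"
  proof -
    have "f8 ((-6/11::real) + (1/22::real) * uu) = ((-6/11::real) + (1/22::real) * uu) + ta B + tb B * uu" by (rule eval_at) (use uu_bounds in simp_all)
    then show ?thesis by (simp add: p8_rep field_simps)
  qed
  have s3: "f8 ((-1/11::real) + (9/220::real) * uu) = (-7/11::real) + (19/220::real) * uu"
  proof -
    have "f8 ((-1/11::real) + (9/220::real) * uu) = ((-1/11::real) + (9/220::real) * uu) + ta D + tb D * uu" by (rule eval_at) (use uu_bounds in simp_all)
    then show ?thesis by (simp add: p8_rep field_simps)
  qed
  have i1: "(f8^^1) (p8 B) = (-6/11::real) + (1/22::real) * uu"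
    by (simp only: One_nat_def funpow.simps comp_apply id_apply s1)
  have i2: "(f8^^2) (p8 B) = (-1/11::real) + (9/220::real) * uu"
    by (simp only: numeral_2_eq_2 funpow.simps comp_apply id_apply s1 s2)
  have i3: "(f8^^3) (p8 B) = (-7/11::real) + (19/220::real) * uu"
    by (simp only: numeral_3_eq_3 funpow.simps comp_apply id_apply s1 s2 s3)
  have near: "\<forall>j::nat. 1 \<le> j \<and> j < 3 \<longrightarrow> (f8^^j) (p8 B) \<noteq> p8 \<beta>"
  proof (intro allI impI)
    fix j :: nat assume j: "1 \<le> j \<and> j < 3"
    then have "j = 1 \<or> j = 2" by arith
    then show "(f8^^j) (p8 B) \<noteq> p8 \<beta>"
    proof (elim disjE)
      assume "j = 1"
      show ?thesis unfolding \<open>j = 1\<close> i1 by (intro near_lemma assms) simp_all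
    next
      assume "j = 2"
      show ?thesis unfolding \<open>j = 2\<close> i2 by (intro near_lemma assms) simp_all
    qed
  qed
  show ?thesis by (rule chain_lemma[OF i3 _ _ _ _ _ assms near]) (use uu_bounds in simp_all)
qed

lemma orb_C: assumes "\<beta> \<in> {B,C,D,F,G,H}" shows "\<forall>m::nat. 1 \<le> m \<longrightarrow> (f8^^m) (p8 C) \<noteq> p8 \<beta>"
proof -
  have s1: "f8 (p8 C) = (-1/22::real) + (21/220::real) * uu"
  proof -
    have "f8 (p8 C) = (pa C + pb C * uu) + ta C + tb C * uu" unfolding p8_rep by (rule eval_at) (use uu_bounds in simp_all)
    then show ?thesis by (simp add: p8_rep field_simps)
  qed
  have i1: "(f8^^1) (p8 C) = (-1/22::real) + (21/220::real) * uu"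
    by (simp only: One_nat_def funpow.simps comp_apply id_apply s1)
  have near: "\<forall>j::nat. 1 \<le> j \<and> j < 1 \<longrightarrow> (f8^^j) (p8 C) \<noteq> p8 \<beta>"
  proof (intro allI impI)
    fix j :: nat assume j: "1 \<le> j \<and> j < 1"
    then show "(f8^^j) (p8 C) \<noteq> p8 \<beta>" by arith
  qed
  show ?thesis by (rule chain_lemma[OF i1 _ _ _ _ _ assms near]) (use uu_bounds in simp_all)
qed

lemma orb_D: assumes "\<beta> \<in> {B,C,D,F,G,H}" shows "\<forall>m::nat. 1 \<le> m \<longrightarrow> (f8^^m) (p8 D) \<noteq> p8 \<beta>"
proof -
  have s1: "f8 (p8 D) = (-1::real) + (0::real) * uu"
  proof -
    have "f8 (p8 D) = (pa D + pb D * uu) + ta D + tb D * uu" unfolding p8_rep by (rule eval_at) (use uu_bounds in simp_all)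
    then show ?thesis by (simp add: p8_rep field_simps)
  qed
  have s2: "f8 ((-1::real) + (0::real) * uu) = (21/22::real) + (1/22::real) * uu"
  proof -
    have "f8 ((-1::real) + (0::real) * uu) = ((-1::real) + (0::real) * uu) + ta A + tb A * uu" by (rule eval_at) (use uu_bounds in simp_all)
    then show ?thesis by (simp add: p8_rep field_simps)
  qed
  have s3: "f8 ((21/22::real) + (1/22::real) * uu) = (9/22::real) + (1/11::real) * uu"
  proof -
    have "f8 ((21/22::real) + (1/22::real) * uu) = ((21/22::real) + (1/22::real) * uu) + ta H + tb H * uu" by (rule eval_at) (use uu_bounds in simp_all)
    then show ?thesis by (simp add: p8_rep field_simps)
  qed
  have i1: "(f8^^1) (p8 D) = (-1::real) + (0::real) * uu"
    by (simp only: One_nat_def funpow.simps comp_apply id_apply s1)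
  have i2: "(f8^^2) (p8 D) = (21/22::real) + (1/22::real) * uu"
    by (simp only: numeral_2_eq_2 funpow.simps comp_apply id_apply s1 s2)
  have i3: "(f8^^3) (p8 D) = (9/22::real) + (1/11::real) * uu"
    by (simp only: numeral_3_eq_3 funpow.simps comp_apply id_apply s1 s2 s3)
  have near: "\<forall>j::nat. 1 \<le> j \<and> j < 3 \<longrightarrow> (f8^^j) (p8 D) \<noteq> p8 \<beta>"
  proof (intro allI impI)
    fix j :: nat assume j: "1 \<le> j \<and> j < 3"
    then have "j = 1 \<or> j = 2" by arith
    then show "(f8^^j) (p8 D) \<noteq> p8 \<beta>"
    proof (elim disjE)
      assume "j = 1"
      show ?thesis unfolding \<open>j = 1\<close> i1 by (intro near_lemma assms) simp_all
    next
      assume "j = 2"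
      show ?thesis unfolding \<open>j = 2\<close> i2 by (intro near_lemma assms) simp_all
    qed
  qed
  show ?thesis by (rule chain_lemma[OF i3 _ _ _ _ _ assms near]) (use uu_bounds in simp_all)
qed

lemma orb_E: assumes "\<beta> \<in> {B,C,D,F,G,H}" shows "\<forall>m::nat. 1 \<le> m \<longrightarrow> (f8^^m) (p8 E) \<noteq> p8 \<beta>"
proof -
  have s1: "f8 (p8 E) = (-1/22::real) + (1/22::real) * uu"
  proof -
    have "f8 (p8 E) = (pa E + pb E * uu) + ta E + tb E * uu" unfolding p8_rep by (rule eval_at) (use uu_bounds in simp_all)
    then show ?thesis by (simp add: p8_rep field_simps)
  qed
  have s2: "f8 ((-1/22::real) + (1/22::real) * uu) = (-13/22::real) + (1/11::real) * uu"
  proof -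
    have "f8 ((-1/22::real) + (1/22::real) * uu) = ((-1/22::real) + (1/22::real) * uu) + ta D + tb D * uu" by (rule eval_at) (use uu_bounds in simp_all)
    then show ?thesis by (simp add: p8_rep field_simps)
  qed
  have i1: "(f8^^1) (p8 E) = (-1/22::real) + (1/22::real) * uu"
    by (simp only: One_nat_def funpow.simps comp_apply id_apply s1)
  have i2: "(f8^^2) (p8 E) = (-13/22::real) + (1/11::real) * uu"
    by (simp only: numeral_2_eq_2 funpow.simps comp_apply id_apply s1 s2)
  have near: "\<forall>j::nat. 1 \<le> j \<and> j < 2 \<longrightarrow> (f8^^j) (p8 E) \<noteq> p8 \<beta>"
  proof (intro allI impI)
    fix j :: nat assume j: "1 \<le> j \<and> j < 2"
    then have "j = 1" by arith
    then show "(f8^^j) (p8 E) \<noteq> p8 \<beta>"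
    proof -
      assume "j = 1"
      show ?thesis unfolding \<open>j = 1\<close> i1 by (intro near_lemma assms) simp_all
    qed
  qed
  show ?thesis by (rule chain_lemma[OF i2 _ _ _ _ _ assms near]) (use uu_bounds in simp_all)
qed

lemma orb_F: assumes "\<beta> \<in> {B,C,D,F,G,H}" shows "\<forall>m::nat. 1 \<le> m \<longrightarrow> (f8^^m) (p8 F) \<noteq> p8 \<beta>"
proof -
  have s1: "f8 (p8 F) = (5/11::real) + (1/22::real) * uu"
  proof -
    have "f8 (p8 F) = (pa F + pb F * uu) + ta F + tb F * uu" unfolding p8_rep by (rule eval_at) (use uu_bounds in simp_all)
    then show ?thesis by (simp add: p8_rep field_simps)
  qed
  have s2: "f8 ((5/11::real) + (1/22::real) * uu) = (10/11::real) + (9/220::real) * uu"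
  proof -
    have "f8 ((5/11::real) + (1/22::real) * uu) = ((5/11::real) + (1/22::real) * uu) + ta F + tb F * uu" by (rule eval_at) (use uu_bounds in simp_all)
    then show ?thesis by (simp add: p8_rep field_simps)
  qed
  have s3: "f8 ((10/11::real) + (9/220::real) * uu) = (4/11::real) + (19/220::real) * uu"
  proof -
    have "f8 ((10/11::real) + (9/220::real) * uu) = ((10/11::real) + (9/220::real) * uu) + ta H + tb H * uu" by (rule eval_at) (use uu_bounds in simp_all)
    then show ?thesis by (simp add: p8_rep field_simps)
  qed
  have i1: "(f8^^1) (p8 F) = (5/11::real) + (1/22::real) * uu"
    by (simp only: One_nat_def funpow.simps comp_apply id_apply s1)
  have i2: "(f8^^2) (p8 F) = (10/11::real) + (9/220::real) * uu"
    by (simp only: numeral_2_eq_2 funpow.simps comp_apply id_apply s1 s2)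
  have i3: "(f8^^3) (p8 F) = (4/11::real) + (19/220::real) * uu"
    by (simp only: numeral_3_eq_3 funpow.simps comp_apply id_apply s1 s2 s3)
  have near: "\<forall>j::nat. 1 \<le> j \<and> j < 3 \<longrightarrow> (f8^^j) (p8 F) \<noteq> p8 \<beta>"
  proof (intro allI impI)
    fix j :: nat assume j: "1 \<le> j \<and> j < 3"
    then have "j = 1 \<or> j = 2" by arith
    then show "(f8^^j) (p8 F) \<noteq> p8 \<beta>"
    proof (elim disjE)
      assume "j = 1"
      show ?thesis unfolding \<open>j = 1\<close> i1 by (intro near_lemma assms) simp_all
    next
      assume "j = 2"
      show ?thesis unfolding \<open>j = 2\<close> i2 by (intro near_lemma assms) simp_all
    qed
  qed
  show ?thesis by (rule chain_lemma[OF i3 _ _ _ _ _ assms near]) (use uu_bounds in simp_all)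
qed

lemma orb_G: assumes "\<beta> \<in> {B,C,D,F,G,H}" shows "\<forall>m::nat. 1 \<le> m \<longrightarrow> (f8^^m) (p8 G) \<noteq> p8 \<beta>"
proof -
  have s1: "f8 (p8 G) = (21/22::real) + (21/220::real) * uu"
  proof -
    have "f8 (p8 G) = (pa G + pb G * uu) + ta G + tb G * uu" unfolding p8_rep by (rule eval_at) (use uu_bounds in simp_all)
    then show ?thesis by (simp add: p8_rep field_simps)
  qed
  have i1: "(f8^^1) (p8 G) = (21/22::real) + (21/220::real) * uu"
    by (simp only: One_nat_def funpow.simps comp_apply id_apply s1)
  have near: "\<forall>j::nat. 1 \<le> j \<and> j < 1 \<longrightarrow> (f8^^j) (p8 G) \<noteq> p8 \<beta>"
  proof (intro allI impI)
    fix j :: nat assume j: "1 \<le> j \<and> j < 1"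
    then show "(f8^^j) (p8 G) \<noteq> p8 \<beta>" by arith
  qed
  show ?thesis by (rule chain_lemma[OF i1 _ _ _ _ _ assms near]) (use uu_bounds in simp_all)
qed

lemma orb_H: assumes "\<beta> \<in> {B,C,D,F,G,H}" shows "\<forall>m::nat. 1 \<le> m \<longrightarrow> (f8^^m) (p8 H) \<noteq> p8 \<beta>"
proof -
  have s1: "f8 (p8 H) = (0::real) + (0::real) * uu"
  proof -
    have "f8 (p8 H) = (pa H + pb H * uu) + ta H + tb H * uu" unfolding p8_rep by (rule eval_at) (use uu_bounds in simp_all)
    then show ?thesis by (simp add: p8_rep field_simps)
  qed
  have s2: "f8 ((0::real) + (0::real) * uu) = (-1/22::real) + (1/22::real) * uu"
  proof -
    have "f8 ((0::real) + (0::real) * uu) = ((0::real) + (0::real) * uu) + ta E + tb E * uu" by (rule eval_at) (use uu_bounds in simp_all)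
    then show ?thesis by (simp add: p8_rep field_simps)
  qed
  have s3: "f8 ((-1/22::real) + (1/22::real) * uu) = (-13/22::real) + (1/11::real) * uu"
  proof -
    have "f8 ((-1/22::real) + (1/22::real) * uu) = ((-1/22::real) + (1/22::real) * uu) + ta D + tb D * uu" by (rule eval_at) (use uu_bounds in simp_all)
    then show ?thesis by (simp add: p8_rep field_simps)
  qed
  have i1: "(f8^^1) (p8 H) = (0::real) + (0::real) * uu"
    by (simp only: One_nat_def funpow.simps comp_apply id_apply s1)
  have i2: "(f8^^2) (p8 H) = (-1/22::real) + (1/22::real) * uu"
    by (simp only: numeral_2_eq_2 funpow.simps comp_apply id_apply s1 s2)
  have i3: "(f8^^3) (p8 H) = (-13/22::real) + (1/11::real) * uu"
    by (simp only: numeral_3_eq_3 funpow.simps comp_apply id_apply s1 s2 s3)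
  have near: "\<forall>j::nat. 1 \<le> j \<and> j < 3 \<longrightarrow> (f8^^j) (p8 H) \<noteq> p8 \<beta>"
  proof (intro allI impI)
    fix j :: nat assume j: "1 \<le> j \<and> j < 3"
    then have "j = 1 \<or> j = 2" by arith
    then show "(f8^^j) (p8 H) \<noteq> p8 \<beta>"
    proof (elim disjE)
      assume "j = 1"
      show ?thesis unfolding \<open>j = 1\<close> i1 by (intro near_lemma assms) simp_all
    next
      assume "j = 2"
      show ?thesis unfolding \<open>j = 2\<close> i2 by (intro near_lemma assms) simp_all
    qed
  qed
  show ?thesis by (rule chain_lemma[OF i3 _ _ _ _ _ assms near]) (use uu_bounds in simp_all)
qed

theorem proposition8p5:
  shows "\<forall>m::nat. m \<ge> 1 \<longrightarrow> (\<forall>\<alpha> \<beta>. p8 \<beta> \<notin> {-1, 0} \<longrightarrow> (f8 ^^ m) (p8 \<alpha>) \<noteq> p8 \<beta>)"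
proof (intro allI impI)
  fix m :: nat and \<alpha> \<beta>
  assume m: "1 \<le> m" and p: "p8 \<beta> \<notin> {-1, 0}"
  have b: "\<beta> \<in> {B,C,D,F,G,H}"
    using p by (cases \<beta>) (simp_all add: p8_rep)
  show "(f8 ^^ m) (p8 \<alpha>) \<noteq> p8 \<beta>"
  proof (cases \<alpha>)
    case A then show ?thesis using orb_A[OF b] m by simp
  next
    case B then show ?thesis using orb_B[OF b] m by simp
  next
    case C then show ?thesis using orb_C[OF b] m by simp
  next
    case D then show ?thesis using orb_D[OF b] m by simp
  next
    case E then show ?thesis using orb_E[OF b] m by simp
  next
    case F then show ?thesis using orb_F[OF b] m by simp
  next
    case G then show ?thesis using orb_G[OF b] m by simp
  next
    case H then show ?thesis using orb_H[OF b] m by simp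
  qed
qed

end
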